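(* Let $N_R, L$ be positive integers and $N_s\ge 2$ an integer, let $\mathbf{s}\in\mathbb{C}^{N_s}$ be nonzero with $P_T=\|\mathbf{s}\|_2^2/N_s$, and let $\mathbf{Y}=[\mathbf{Y}_1^T,\ldots,\mathbf{Y}_L^T]^T$ with $\mathbf{Y}_l\in\mathbb{C}^{N_R\times N_s}$ satisfy either $$\mathcal{H}_1:\ \mathbf{Y}_l=\mathbf{h}_l\mathbf{s}^T+\mathbf{Z}_l\ (l=1,\ldots,L)\qquad\text{or}\qquad \mathcal{H}_0:\ \mathbf{Y}_l=\mathbf{Z}_l\ (l=1,\ldots,L),$$ where $\mathbf{h}_l\in\mathbb{C}^{N_R}$ are deterministic and all entries of $\mathbf{Z}_1,\ldots,\mathbf{Z}_L$ are i.i.d. circularly symmetric complex Gaussian with zero mean and variance $\sigma^2>0$. Define $$L_G=\frac{\sum_{l=1}^L\frac{1}{\|\mathbf{s}\|_2^2}\|\mathbf{Y}_l\mathbf{s}^*\|_2^2}{\sum_{l=1}^L\left(\|\mathbf{Y}_l\|_F^2-\frac{1}{\|\mathbf{s}\|_2^2}\|\mathbf{Y}_l\mathbf{s}^*\|_2^2\right)}.$$ Then $$(N_s-1)L_G\sim\begin{cases}\mathcal{F}(2N_RL,\,2N_RL(N_s-1),\,0)&\text{under }\mathcal{H}_0,\\ \mathcal{F}(2N_RL,\,2N_RL(N_s-1),\,\lambda)&\text{under }\mathcal{H}_1,\end{cases}$$ where $$\lambda=\frac{2\|\mathbf{s}\|_2^2\sum_{l=1}^L\|\mathbf{h}_l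\|_2^2}{\sigma^2}=\frac{2P_TN_s\sum_{l=1}^L\|\mathbf{h}_l\|_2^2}{\sigma^2}.$$
   Context: $\mathcal{F}(n_1,n_2,\lambda)$ denotes the noncentral F-distribution with degrees of freedom $n_1,n_2$ and noncentrality parameter $\lambda$, i.e. the law of $(X_1/n_1)/(X_2/n_2)$ where $X_1$ is noncentral chi-square with $n_1$ degrees of freedom and noncentrality $\lambda$, and $X_2$ is an independent central chi-square with $n_2$ degrees of freedom. $\mathbf{s}^*$ is the entrywise complex conjugate of $\mathbf{s}$; $\|\cdot\|_F$ is the Frobenius norm. *)

theory Defs
  imports "HOL-Probability.Probability"
begin

text \<open>Law of a noncentral chi-square variable with k degrees of freedom and
noncentrality lam: the law of the sum of squares of k independent real
Gaussians with unit variance and means (sqrt lam, 0, ..., 0), whose squared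
means sum to lam.\<close>
definition nc_chi2 :: "nat \<Rightarrow> real \<Rightarrow> real measure" where
  "nc_chi2 k lam =
     distr (PiM {..<k} (\<lambda>_. density lborel std_normal_density)) borel
       (\<lambda>x. (\<Sum>i<k. (x i + (if i = 0 then sqrt lam else 0))\<^sup>2))"

definition nc_F :: "nat \<Rightarrow> nat \<Rightarrow> real \<Rightarrow> real measure" where
  "nc_F n1 n2 lam =
     distr (nc_chi2 n1 lam \<Otimes>\<^sub>M nc_chi2 n2 0) borel
       (\<lambda>(a, b). (a / real n1) / (b / real n2))"

text \<open>Statistic L_G. Y l r t is the (r,t) entry of Y_l (r < NR, t < Ns),
s t the t-th entry of s.\<close>
definition LG_stat :: "nat \<Rightarrow> nat \<Rightarrow> nat \<Rightarrow> (nat \<Rightarrow> complex) \<Rightarrow>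
    (nat \<Rightarrow> nat \<Rightarrow> nat \<Rightarrow> complex) \<Rightarrow> real" where
  "LG_stat NR L Ns s Y =
    (let ns2 = (\<Sum>t<Ns. (cmod (s t))\<^sup>2);
         proj = (\<lambda>l. (\<Sum>r<NR. (cmod (\<Sum>t<Ns. Y l r t * cnj (s t)))\<^sup>2) / ns2);
         frob = (\<lambda>l. \<Sum>r<NR. \<Sum>t<Ns. (cmod (Y l r t))\<^sup>2)
     in (\<Sum>l<L. proj l) / (\<Sum>l<L. frob l - proj l))"

end

theory Submission
  imports Defs "HOL-Probability.Probability"
begin


lemma shear_y_lborel:
  "distr (lborel \<Otimes>\<^sub>M lborel) (lborel \<Otimes>\<^sub>M lborel) (\<lambda>(x::real,y::real). (x, y + b*x)) = lborel \<Otimes>\<^sub>M lborel"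
proof (rule measure_eqI)
  show "sets (distr (lborel \<Otimes>\<^sub>M lborel) (lborel \<Otimes>\<^sub>M lborel) (\<lambda>(x::real,y::real). (x, y + b*x))) = sets (lborel \<Otimes>\<^sub>M lborel)" by simp
next
  fix A assume A: "A \<in> sets (distr (lborel \<Otimes>\<^sub>M lborel) (lborel \<Otimes>\<^sub>M lborel) (\<lambda>(x::real,y::real). (x, y + b*x)))"
  then have A': "A \<in> sets (lborel \<Otimes>\<^sub>M lborel)" by simp
  have m[measurable]: "(\<lambda>(x::real,y::real). (x, y + b*x)) \<in> measurable (lborel \<Otimes>\<^sub>M lborel) (lborel \<Otimes>\<^sub>M lborel)"
    by measurable
  have pre: "(\<lambda>(x::real,y::real). (x, y + b*x)) -` A \<inter> space (lborel \<Otimes>\<^sub>M lborel) \<in> sets (lborel \<Otimes>\<^sub>M lborel)"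
    using A' m by (rule measurable_sets[rotated])
  have "emeasure (distr (lborel \<Otimes>\<^sub>M lborel) (lborel \<Otimes>\<^sub>M lborel) (\<lambda>(x::real,y::real). (x, y + b*x))) A
      = emeasure (lborel \<Otimes>\<^sub>M lborel) ((\<lambda>(x::real,y::real). (x, y + b*x)) -` A \<inter> space (lborel \<Otimes>\<^sub>M lborel))"
    using A' by (simp add: emeasure_distr)
  also have "\<dots> = (\<integral>\<^sup>+x. emeasure lborel (Pair x -` ((\<lambda>(x::real,y::real). (x, y + b*x)) -` A \<inter> space (lborel \<Otimes>\<^sub>M lborel))) \<partial>lborel)"
    using pre by (rule lborel.emeasure_pair_measure_alt)
  also have "\<dots> = (\<integral>\<^sup>+x. emeasure lborel (Pair x -` A) \<partial>lborel)"
  proof (rule nn_integral_cong)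
    fix x :: real
    have PA: "Pair x -` A \<in> sets lborel" using A' by (simp add: sets_Pair1)
    have eq: "Pair x -` ((\<lambda>(x::real,y::real). (x, y + b*x)) -` A \<inter> space (lborel \<Otimes>\<^sub>M lborel))
        = (\<lambda>y. b*x + y) -` (Pair x -` A) \<inter> space lborel"
      by (auto simp: space_pair_measure add.commute)
    have "emeasure lborel ((\<lambda>y. b*x + y) -` (Pair x -` A) \<inter> space lborel)
        = emeasure (distr lborel borel (\<lambda>y. b*x + y)) (Pair x -` A)"
      using PA by (subst emeasure_distr) auto
    also have "\<dots> = emeasure lborel (Pair x -` A)"
      by (simp add: lborel_distr_plus)
    finally show "emeasure lborel (Pair x -` ((\<lambda>(x::real,y::real). (x, y + b*x)) -` A \<inter> space (lborel \<Otimes>\<^sub>M lborel))) = emeasure lborel (Pair x -` A)"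
      using eq by simp
  qed
  also have "\<dots> = emeasure (lborel \<Otimes>\<^sub>M lborel) A"
    using A' by (rule lborel.emeasure_pair_measure_alt[symmetric])
  finally show "emeasure (distr (lborel \<Otimes>\<^sub>M lborel) (lborel \<Otimes>\<^sub>M lborel) (\<lambda>(x::real,y::real). (x, y + b*x))) A = emeasure (lborel \<Otimes>\<^sub>M lborel) A" .
qed

lemma distr_comp_inv:
  assumes f: "f \<in> measurable M M" and g: "g \<in> measurable M M"
    and "distr M M f = M" "distr M M g = M"
  shows "distr M M (\<lambda>x. g (f x)) = M"
proof -
  have "distr M M (\<lambda>x. g (f x)) = distr (distr M M f) M g"
    using f g by (simp add: distr_distr comp_def)
  also have "\<dots> = M" using assms(3,4) by (simp only:)
  finally show ?thesis .
qed

lemma shear_x_lborel: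
  "distr (lborel \<Otimes>\<^sub>M lborel) (lborel \<Otimes>\<^sub>M lborel) (\<lambda>(x::real,y::real). (x + a*y, y)) = lborel \<Otimes>\<^sub>M lborel"
proof -
  let ?M = "lborel \<Otimes>\<^sub>M lborel :: (real \<times> real) measure"
  have sw: "distr ?M ?M (\<lambda>(x,y). (y,x)) = ?M"
    by (rule lborel_pair.distr_pair_swap[symmetric])
  have m1: "(\<lambda>(x::real,y::real). (y,x)) \<in> measurable ?M ?M" by measurable
  have m2: "(\<lambda>(x::real,y::real). (x, y + a*x)) \<in> measurable ?M ?M" by measurable
  have m3: "(\<lambda>p. (\<lambda>(x,y). (x, y + a*x)) ((\<lambda>(x::real,y::real). (y,x)) p)) \<in> measurable ?M ?M"
    using measurable_comp[OF m1 m2] by (simp add: comp_def)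
  have 1: "distr ?M ?M (\<lambda>p. (\<lambda>(x,y). (x, y + a*x)) ((\<lambda>(x,y). (y,x)) p)) = ?M"
    by (rule distr_comp_inv[OF m1 m2 sw shear_y_lborel])
  have 2: "distr ?M ?M (\<lambda>p. (\<lambda>(x,y). (y,x)) ((\<lambda>p. (\<lambda>(x,y). (x, y + a*x)) ((\<lambda>(x,y). (y,x)) p)) p)) = ?M"
    by (rule distr_comp_inv[OF m3 m1 1 sw])
  have eq: "(\<lambda>p. (\<lambda>(x,y). (y,x)) ((\<lambda>p. (\<lambda>(x,y). (x, y + a*x)) ((\<lambda>(x,y). (y,x)) p)) p)) = (\<lambda>(x::real,y::real). (x + a*y, y))"
    by (auto simp: fun_eq_iff)
  show ?thesis using 2 unfolding eq .
qed

lemma lborel_uminus': "distr lborel lborel uminus = (lborel :: real measure)"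
proof -
  have "distr lborel lborel uminus = distr lborel borel (uminus :: real \<Rightarrow> real)"
    by (rule distr_cong) auto
  then show ?thesis by (simp add: lborel_distr_uminus)
qed

lemma neg_lborel2:
  "distr (lborel \<Otimes>\<^sub>M lborel) (lborel \<Otimes>\<^sub>M lborel) (\<lambda>(x::real,y::real). (-x, -y)) = lborel \<Otimes>\<^sub>M lborel"
proof -
  have "distr lborel lborel uminus \<Otimes>\<^sub>M distr lborel lborel uminus
     = distr (lborel \<Otimes>\<^sub>M lborel) (lborel \<Otimes>\<^sub>M lborel) (\<lambda>(x::real,y::real). (-x, -y))"
    by (rule pair_measure_distr) (simp_all add: lborel_uminus' lborel.sigma_finite_measure_axioms)
  then show ?thesis
    by (simp add: lborel_uminus')
qed

definition rot2 :: "real \<Rightarrow> real \<Rightarrow> real \<times> real \<Rightarrow> real \<times> real" where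
  "rot2 c s = (\<lambda>(x,y). (c * x - s * y, s * x + c * y))"

lemma rot2_measurable[measurable]: "rot2 c s \<in> measurable (lborel \<Otimes>\<^sub>M lborel) (lborel \<Otimes>\<^sub>M lborel)"
  unfolding rot2_def by measurable

lemma rot2_lborel:
  assumes cs: "c^2 + s^2 = 1"
  shows "distr (lborel \<Otimes>\<^sub>M lborel) (lborel \<Otimes>\<^sub>M lborel) (rot2 c s) = lborel \<Otimes>\<^sub>M lborel"
proof (cases "s = 0")
  case True
  then have "c = 1 \<or> c = -1" using cs by (simp add: power2_eq_1_iff)
  then show ?thesis
  proof
    assume c: "c = 1"
    have "rot2 c s = (\<lambda>x. x)" using c True by (auto simp: rot2_def fun_eq_iff)
    then show ?thesis by simp
  next
    assume c: "c = -1"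
    have "rot2 c s = (\<lambda>(x,y). (-x, -y))" using c True by (auto simp: rot2_def fun_eq_iff)
    then show ?thesis by (simp add: neg_lborel2)
  qed
next
  case False
  let ?M = "lborel \<Otimes>\<^sub>M lborel :: (real \<times> real) measure"
  define a where "a = (c - 1) / s"
  have m1: "(\<lambda>(x::real,y::real). (x + a*y, y)) \<in> measurable ?M ?M" by measurable
  have m2: "(\<lambda>(x::real,y::real). (x, y + s * x)) \<in> measurable ?M ?M" by measurable
  have m3: "(\<lambda>p. (\<lambda>(x,y). (x, y + s * x)) ((\<lambda>(x::real,y::real). (x + a*y, y)) p)) \<in> measurable ?M ?M"
    using measurable_comp[OF m1 m2] by (simp add: comp_def)
  have 1: "distr ?M ?M (\<lambda>p. (\<lambda>(x,y). (x, y + s * x)) ((\<lambda>(x::real,y::real). (x + a*y, y)) p)) = ?M"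
    by (rule distr_comp_inv[OF m1 m2 shear_x_lborel shear_y_lborel])
  have 2: "distr ?M ?M (\<lambda>p. (\<lambda>(x::real,y::real). (x + a*y, y)) ((\<lambda>p. (\<lambda>(x,y). (x, y + s * x)) ((\<lambda>(x::real,y::real). (x + a*y, y)) p)) p)) = ?M"
    by (rule distr_comp_inv[OF m3 m1 1 shear_x_lborel])
  have e1: "1 + a * s = (c::real)" using False by (simp add: a_def field_simps)
  have e2: "a + a * c = -s"
  proof -
    have "a + a * c = (c^2 - 1) / s" using False by (simp add: a_def field_simps power2_eq_square)
    also have "\<dots> = -s" using cs False by (simp add: field_simps power2_eq_square)
    finally show ?thesis .
  qed
  have eq: "(\<lambda>p. (\<lambda>(x::real,y::real). (x + a*y, y)) ((\<lambda>p. (\<lambda>(x,y). (x, y + s * x)) ((\<lambda>(x::real,y::real). (x + a*y, y)) p)) p)) = rot2 c s"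
  proof
    fix p :: "real \<times> real"
    obtain x y where p: "p = (x,y)" by (cases p)
    have "x + a*y + a*(y + s * (x + a*y)) = x * (1 + a * s) + y * (a + a * (1 + a * s))"
      by (simp add: algebra_simps)
    also have "\<dots> = c * x - s * y" unfolding e1 e2 by simp
    finally have A: "x + a*y + a*(y + s * (x + a*y)) = c * x - s * y" .
    have "y + s * (x + a*y) = s * x + y * (1 + a * s)"
      by (simp add: algebra_simps)
    also have "\<dots> = s * x + c * y" unfolding e1 by simp
    finally have B: "y + s * (x + a*y) = s * x + c * y" .
    show "(\<lambda>p. (\<lambda>(x::real,y::real). (x + a*y, y)) ((\<lambda>p. (\<lambda>(x,y). (x, y + s * x)) ((\<lambda>(x::real,y::real). (x + a*y, y)) p)) p)) p = rot2 c s p"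
      using A B by (simp add: p rot2_def)
  qed
  show ?thesis using 2 unfolding eq .
qed

abbreviation stdN :: "real measure" where
  "stdN \<equiv> density lborel std_normal_density"

lemma prob_space_stdN: "prob_space stdN"
  by (rule prob_space_normal_density) simp

lemma sets_stdN[simp, measurable_cong]: "sets stdN = sets borel" by simp

lemma stdN_pair: "stdN \<Otimes>\<^sub>M stdN = density (lborel \<Otimes>\<^sub>M lborel) (\<lambda>(x,y). ennreal (std_normal_density x) * ennreal (std_normal_density y))"
proof (rule pair_measure_density)
  show "sigma_finite_measure (lborel :: real measure)" by (rule lborel.sigma_finite_measure_axioms)
  show "sigma_finite_measure stdN"
    using prob_space_stdN by (simp add: prob_space_imp_sigma_finite)
qed auto

lemma rot2_gauss:
  assumes cs: "c^2 + s^2 = 1"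
  shows "distr (stdN \<Otimes>\<^sub>M stdN) (stdN \<Otimes>\<^sub>M stdN) (rot2 c s) = stdN \<Otimes>\<^sub>M stdN"
proof -
  let ?L = "lborel \<Otimes>\<^sub>M lborel :: (real \<times> real) measure"
  define g where "g = (\<lambda>(x,y). ennreal (std_normal_density x) * ennreal (std_normal_density y))"
  have gm[measurable]: "g \<in> borel_measurable ?L" unfolding g_def by measurable
  have ginv: "g (rot2 c s p) = g p" for p
  proof -
    obtain x y where p: "p = (x,y)" by (cases p)
    have sq: "(c * x - s * y)^2 + (s * x + c * y)^2 = x^2 + y^2"
    proof -
      have "(c * x - s * y)^2 + (s * x + c * y)^2 = (c^2 + s^2) * (x^2 + y^2)" by (simp add: algebra_simps power2_eq_square)
      then show ?thesis using cs by simp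
    qed
    have "std_normal_density (c * x - s * y) * std_normal_density (s * x + c * y) = std_normal_density x * std_normal_density y"
    proof -
      have "std_normal_density (c * x - s * y) * std_normal_density (s * x + c * y)
          = (1 / sqrt (2 * pi))^2 * exp (- ((c * x - s * y)^2 + (s * x + c * y)^2) / 2)"
        by (simp add: std_normal_density_def power2_eq_square exp_add[symmetric] add_divide_distrib diff_divide_distrib)
      also have "\<dots> = (1 / sqrt (2 * pi))^2 * exp (- (x^2 + y^2) / 2)" by (simp only: sq)
      also have "\<dots> = std_normal_density x * std_normal_density y"
        by (simp add: std_normal_density_def power2_eq_square exp_add[symmetric] add_divide_distrib diff_divide_distrib)
      finally show ?thesis .
    qed
    then show ?thesis
      by (simp add: g_def p rot2_def ennreal_mult[symmetric])
  qed
  have D: "stdN \<Otimes>\<^sub>M stdN = density ?L g" unfolding g_def by (rule stdN_pair)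
  have "density ?L g = density (distr ?L ?L (rot2 c s)) g" by (simp add: rot2_lborel[OF cs])
  also have "\<dots> = distr (density ?L (\<lambda>p. g (rot2 c s p))) ?L (rot2 c s)"
    by (rule density_distr) auto
  also have "\<dots> = distr (density ?L g) ?L (rot2 c s)" by (simp add: ginv)
  finally have E: "density ?L g = distr (density ?L g) ?L (rot2 c s)" .
  have "distr (stdN \<Otimes>\<^sub>M stdN) (stdN \<Otimes>\<^sub>M stdN) (rot2 c s) = distr (density ?L g) ?L (rot2 c s)"
    unfolding D by (rule distr_cong) (auto intro!: sets_pair_measure_cong)
  then show ?thesis using D E by simp
qed




definition giv :: "'i \<Rightarrow> 'i \<Rightarrow> real \<Rightarrow> real \<Rightarrow> ('i \<Rightarrow> real) \<Rightarrow> ('i \<Rightarrow> real)" where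
  "giv i j c s x = x(i := c * x i - s * x j, j := s * x i + c * x j)"

abbreviation GM :: "'i set \<Rightarrow> ('i \<Rightarrow> real) measure" where
  "GM J \<equiv> PiM J (\<lambda>_. stdN)"

interpretation stdN_prod: product_sigma_finite "\<lambda>_. stdN"
  unfolding product_sigma_finite_def
  using prob_space_stdN by (auto simp: prob_space_imp_sigma_finite)

lemma prob_space_GM: "finite J \<Longrightarrow> prob_space (GM J)"
  by (intro prob_space_PiM prob_space_stdN)

lemma giv_measurable:
  assumes "i \<in> J" "j \<in> J"
  shows "giv i j c s \<in> measurable (GM J) (GM J)"
proof -
  have eq: "giv i j c s = (\<lambda>\<omega> k. (if k = j then s * \<omega> i + c * \<omega> j else if k = i then c * \<omega> i - s * \<omega> j else \<omega> k))"
    by (auto simp: giv_def fun_eq_iff)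
  show ?thesis unfolding eq
  proof (rule measurable_PiM_single')
    fix k assume k: "k \<in> J"
    show "(\<lambda>\<omega>. if k = j then s * \<omega> i + c * \<omega> j else if k = i then c * \<omega> i - s * \<omega> j else \<omega> k) \<in> measurable (GM J) stdN"
      using assms k by (simp add: measurable_cong_sets[OF refl sets_stdN])
  next
    show "(\<lambda>\<omega> k. if k = j then s * \<omega> i + c * \<omega> j else if k = i then c * \<omega> i - s * \<omega> j else \<omega> k) \<in> space (GM J) \<rightarrow> (\<Pi>\<^sub>E k\<in>J. space stdN)"
      using assms by (auto simp: space_PiM PiE_iff extensional_def)
  qed
qed

definition emb2 :: "'i \<Rightarrow> 'i \<Rightarrow> real \<times> real \<Rightarrow> ('i \<Rightarrow> real)" where
  "emb2 i j = (\<lambda>(a,b). \<lambda>k\<in>{i,j}. if k = i then a else b)"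

lemma emb2_measurable: "emb2 i j \<in> measurable (stdN \<Otimes>\<^sub>M stdN) (GM {i,j})"
proof -
  have eq: "emb2 i j = (\<lambda>p k. (if k \<in> {i,j} then (if k = i then fst p else snd p) else undefined))"
    by (auto simp: emb2_def fun_eq_iff restrict_def split: prod.splits)
  show ?thesis unfolding eq
    by (rule measurable_PiM_single') (auto simp: space_PiM PiE_iff extensional_def)
qed

lemma emb2_distr:
  assumes ij: "i \<noteq> j"
  shows "distr (stdN \<Otimes>\<^sub>M stdN) (GM {i,j}) (emb2 i j) = GM {i,j}"
proof (rule stdN_prod.PiM_eqI)
  show "finite {i,j}" by simp
  show "sets (distr (stdN \<Otimes>\<^sub>M stdN) (GM {i, j}) (emb2 i j)) = sets (GM {i,j})" by simp
  fix A assume A: "\<And>k. k \<in> {i,j} \<Longrightarrow> A k \<in> sets stdN"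
  have Ai: "A i \<in> sets borel" "A j \<in> sets borel" using A by auto
  have pre: "emb2 i j -` Pi\<^sub>E {i,j} A \<inter> space (stdN \<Otimes>\<^sub>M stdN) = A i \<times> A j"
    using ij by (auto simp: emb2_def space_pair_measure PiE_iff)
  have "emeasure (distr (stdN \<Otimes>\<^sub>M stdN) (GM {i, j}) (emb2 i j)) (Pi\<^sub>E {i,j} A)
      = emeasure (stdN \<Otimes>\<^sub>M stdN) (A i \<times> A j)"
    using A emb2_measurable[of i j] by (subst emeasure_distr) (auto simp: pre)
  also have "\<dots> = emeasure stdN (A i) * emeasure stdN (A j)"
    using Ai by (intro stdN_prod.emeasure_pair_measure_Times) (auto simp: prob_space_stdN prob_space_imp_sigma_finite)
  also have "\<dots> = (\<Prod>k\<in>{i,j}. emeasure stdN (A k))" using ij by simp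
  finally show "emeasure (distr (stdN \<Otimes>\<^sub>M stdN) (GM {i, j}) (emb2 i j)) (Pi\<^sub>E {i,j} A) = (\<Prod>k\<in>{i,j}. emeasure stdN (A k))" .
qed

lemma rot2_measurable_N: "rot2 c s \<in> measurable (stdN \<Otimes>\<^sub>M stdN) (stdN \<Otimes>\<^sub>M stdN)"
proof -
  have e: "sets (stdN \<Otimes>\<^sub>M stdN) = sets (lborel \<Otimes>\<^sub>M lborel)"
    by (intro sets_pair_measure_cong) auto
  show ?thesis using rot2_measurable[of c s] unfolding measurable_cong_sets[OF e e] .
qed

lemma giv_emb2: "i \<noteq> j \<Longrightarrow> giv i j c s (emb2 i j p) = emb2 i j (rot2 c s p)"
  by (cases p) (simp add: giv_def emb2_def rot2_def fun_eq_iff restrict_def)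

lemma giv_GM2:
  assumes ij: "i \<noteq> j" and cs: "c^2 + s^2 = 1"
  shows "distr (GM {i,j}) (GM {i,j}) (giv i j c s) = GM {i,j}"
proof -
  let ?N = "stdN \<Otimes>\<^sub>M stdN"
  have "distr (GM {i,j}) (GM {i,j}) (giv i j c s) = distr (distr ?N (GM {i,j}) (emb2 i j)) (GM {i,j}) (giv i j c s)"
    by (simp add: emb2_distr[OF ij])
  also have "\<dots> = distr ?N (GM {i,j}) (\<lambda>p. giv i j c s (emb2 i j p))"
    using distr_distr[OF giv_measurable[of i "{i,j}" j c s] emb2_measurable[of i j]] by (simp add: comp_def)
  also have "\<dots> = distr ?N (GM {i,j}) (\<lambda>p. emb2 i j (rot2 c s p))"
    using ij by (simp add: giv_emb2)
  also have "\<dots> = distr (distr ?N ?N (rot2 c s)) (GM {i,j}) (emb2 i j)"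
    using distr_distr[OF emb2_measurable[of i j] rot2_measurable_N[of c s]] by (simp add: comp_def)
  also have "\<dots> = GM {i,j}" by (simp add: rot2_gauss[OF cs] emb2_distr[OF ij])
  finally show ?thesis .
qed

lemma giv_merge:
  assumes "i \<noteq> j" "{i,j} \<inter> R = {}"
  shows "giv i j c s (merge {i,j} R (u, v)) = merge {i,j} R (giv i j c s u, v)"
  using assms by (auto simp: giv_def merge_def fun_eq_iff)

lemma giv_GM:
  assumes J: "finite J" and ij: "i \<in> J" "j \<in> J" "i \<noteq> j" and cs: "c^2 + s^2 = 1"
  shows "distr (GM J) (GM J) (giv i j c s) = GM J"
proof -
  define R where "R = J - {i,j}"
  have JR: "J = {i,j} \<union> R" and dis: "{i,j} \<inter> R = {}" and fR: "finite R"
    using ij J by (auto simp: R_def)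
  let ?P = "GM {i,j} \<Otimes>\<^sub>M GM R"
  have M: "distr ?P (GM J) (merge {i,j} R) = GM J"
    unfolding JR by (rule stdN_prod.distr_merge) (use dis fR in auto)
  have mm: "merge {i,j} R \<in> measurable ?P (GM J)"
    unfolding JR by (rule measurable_merge)
  have g2m0: "(\<lambda>p. (giv i j c s (fst p), snd p)) \<in> measurable ?P ?P"
    by (intro measurable_Pair measurable_compose[OF measurable_fst giv_measurable[of i "{i,j}" j c s]] measurable_snd) auto
  have g2e: "(\<lambda>(u,v). (giv i j c s u, v)) = (\<lambda>p. (giv i j c s (fst p), snd p))"
    by (simp add: split_beta')
  have g2m: "(\<lambda>(u,v). (giv i j c s u, v)) \<in> measurable ?P ?P"
    unfolding g2e by (rule g2m0)
  have sf: "sigma_finite_measure (distr (GM R) (GM R) (\<lambda>x. x))"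
    using prob_space_GM[OF fR] by (simp add: prob_space_imp_sigma_finite)
  have P: "distr ?P ?P (\<lambda>(u,v). (giv i j c s u, v)) = ?P"
  proof -
    have "distr (GM {i,j}) (GM {i,j}) (giv i j c s) \<Otimes>\<^sub>M distr (GM R) (GM R) (\<lambda>x. x)
       = distr ?P ?P (\<lambda>(u,v). (giv i j c s u, v))"
      by (rule pair_measure_distr[OF giv_measurable _ sf]) auto
    then show ?thesis using giv_GM2[OF ij(3) cs] by simp
  qed
  have "distr (GM J) (GM J) (giv i j c s) = distr (distr ?P (GM J) (merge {i,j} R)) (GM J) (giv i j c s)"
    by (simp add: M)
  also have "\<dots> = distr ?P (GM J) (\<lambda>p. giv i j c s (merge {i,j} R p))"
    using distr_distr[OF giv_measurable[of i J j c s] mm] ij by (simp add: comp_def)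
  also have "\<dots> = distr ?P (GM J) (\<lambda>p. merge {i,j} R ((\<lambda>(u,v). (giv i j c s u, v)) p))"
    using giv_merge[OF ij(3) dis] by (intro distr_cong) (auto split: prod.splits)
  also have "\<dots> = distr (distr ?P ?P (\<lambda>(u,v). (giv i j c s u, v))) (GM J) (merge {i,j} R)"
    using distr_distr[OF mm g2m] by (simp add: comp_def)
  also have "\<dots> = GM J" by (simp add: P M)
  finally show ?thesis .
qed




inductive_set rots :: "'i set \<Rightarrow> (('i \<Rightarrow> real) \<Rightarrow> ('i \<Rightarrow> real)) set" for J where
  rots_id: "(\<lambda>x. x) \<in> rots J"
| rots_step: "Q \<in> rots J \<Longrightarrow> i \<in> J \<Longrightarrow> j \<in> J \<Longrightarrow> i \<noteq> j \<Longrightarrow> c^2 + s^2 = 1 \<Longrightarrow> (\<lambda>x. giv i j c s (Q x)) \<in> rots J"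

lemma rots_mono: "Q \<in> rots J' \<Longrightarrow> J' \<subseteq> J \<Longrightarrow> Q \<in> rots J"
  by (induction rule: rots.induct) (auto intro: rots.intros)

lemma rots_comp: "Q2 \<in> rots J \<Longrightarrow> Q1 \<in> rots J \<Longrightarrow> (\<lambda>x. Q2 (Q1 x)) \<in> rots J"
proof (induction rule: rots.induct)
  case rots_id then show ?case by simp
next
  case (rots_step Q i j c s)
  then show ?case using rots.rots_step[of "\<lambda>x. Q (Q1 x)" J i j c s] by simp
qed

lemma rots_measurable: "Q \<in> rots J \<Longrightarrow> Q \<in> measurable (GM J) (GM J)"
proof (induction rule: rots.induct)
  case rots_id then show ?case by simp
next
  case (rots_step Q i j c s)
  show ?case using measurable_comp[OF rots_step.IH giv_measurable[of i J j c s]] rots_step.hyps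
    by (simp add: comp_def)
qed

lemma rots_distr: "Q \<in> rots J \<Longrightarrow> finite J \<Longrightarrow> distr (GM J) (GM J) Q = GM J"
proof (induction rule: rots.induct)
  case rots_id then show ?case by simp
next
  case (rots_step Q i j c s)
  show ?case
    by (rule distr_comp_inv[OF rots_measurable[OF rots_step.hyps(1)] giv_measurable[of i J j c s]
          rots_step.IH[OF rots_step.prems] giv_GM[OF rots_step.prems rots_step.hyps(2-5)]])
       (use rots_step.hyps in auto)
qed

lemma rots_outside: "Q \<in> rots J \<Longrightarrow> k \<notin> J \<Longrightarrow> Q x k = x k"
  by (induction rule: rots.induct) (auto simp: giv_def)

lemma rots_zero: "Q \<in> rots J \<Longrightarrow> (\<And>k. k \<in> J \<Longrightarrow> x k = 0) \<Longrightarrow> k \<in> J \<Longrightarrow> Q x k = 0"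
proof (induction arbitrary: k rule: rots.induct)
  case rots_id then show ?case by simp
next
  case (rots_step Q i j c s)
  then show ?case by (auto simp: giv_def)
qed

definition ipK :: "'i set \<Rightarrow> ('i \<Rightarrow> real) \<Rightarrow> ('i \<Rightarrow> real) \<Rightarrow> real" where
  "ipK K x y = (\<Sum>k\<in>K. x k * y k)"

lemma giv_ip:
  fixes K :: "'i set" and x y :: "'i \<Rightarrow> real"
  assumes K: "finite K" and ij: "i \<in> K" "j \<in> K" "i \<noteq> j" and cs: "c^2 + s^2 = 1"
  shows "ipK K (giv i j c s x) (giv i j c s y) = ipK K x y"
proof -
  have split: "(\<Sum>k\<in>K. f k) = f i + f j + (\<Sum>k\<in>K - {i,j}. f k)" for f :: "'i \<Rightarrow> real"
  proof -
    have "(\<Sum>k\<in>K. f k) = f i + (\<Sum>k\<in>K - {i}. f k)" using K ij by (simp add: sum.remove)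
    also have "(\<Sum>k\<in>K - {i}. f k) = f j + (\<Sum>k\<in>K - {i} - {j}. f k)" using K ij by (simp add: sum.remove)
    also have "K - {i} - {j} = K - {i,j}" by auto
    finally show ?thesis by simp
  qed
  have rest: "(\<Sum>k\<in>K - {i,j}. giv i j c s x k * giv i j c s y k) = (\<Sum>k\<in>K - {i,j}. x k * y k)"
    by (rule sum.cong) (auto simp: giv_def)
  have ij2: "(c * x i - s * x j) * (c * y i - s * y j) + (s * x i + c * x j) * (s * y i + c * y j)
      = (c^2 + s^2) * (x i * y i + x j * y j)"
    by (simp add: algebra_simps power2_eq_square)
  show ?thesis
    unfolding ipK_def split[of "\<lambda>k. giv i j c s x k * giv i j c s y k"] split[of "\<lambda>k. x k * y k"] rest
    using ij ij2 cs by (simp add: giv_def)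
qed

lemma rots_ip: "Q \<in> rots J \<Longrightarrow> finite K \<Longrightarrow> J \<subseteq> K \<Longrightarrow> ipK K (Q x) (Q y) = ipK K x y"
proof (induction rule: rots.induct)
  case rots_id then show ?case by simp
next
  case (rots_step Q i j c s)
  then show ?case using giv_ip[of K i j c s "Q x" "Q y"] by auto
qed

lemma rots_add: "Q \<in> rots J \<Longrightarrow> Q (\<lambda>k. x k + y k) = (\<lambda>k. Q x k + Q y k)"
proof (induction rule: rots.induct)
  case rots_id then show ?case by simp
next
  case (rots_step Q i j c s)
  then show ?case by (simp add: giv_def fun_eq_iff algebra_simps)
qed

lemma lemA_aux:
  fixes v :: "'i \<Rightarrow> real"
  assumes "finite D" "i \<notin> D"
  shows "\<exists>Q\<in>rots (insert i D). \<forall>k\<in>D. Q v k = 0"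
  using assms
proof (induction D rule: finite_induct)
  case empty
  show ?case by (intro bexI[of _ "\<lambda>x. x"]) (auto intro: rots.intros)
next
  case (insert j D)
  then obtain Q where Q: "Q \<in> rots (insert i D)" and z: "\<forall>k\<in>D. Q v k = 0" by auto
  have ij: "i \<noteq> j" using insert by auto
  have sub: "insert i D \<subseteq> insert i (insert j D)" by auto
  define r where "r = sqrt ((Q v i)^2 + (Q v j)^2)"
  show ?case
  proof (cases "r = 0")
    case True
    then have "Q v j = 0" unfolding r_def by (simp add: add_nonneg_eq_0_iff)
    then show ?thesis using Q z rots_mono[OF Q sub] by (intro bexI[of _ Q]) auto
  next
    case False
    define c where "c = Q v i / r"
    define s where "s = - Q v j / r"
    have r2: "r^2 = (Q v i)^2 + (Q v j)^2" unfolding r_def by simp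
    have "c^2 + s^2 = ((Q v i)^2 + (Q v j)^2) / r^2"
      by (simp add: c_def s_def power_divide add_divide_distrib)
    moreover have "(Q v i)^2 + (Q v j)^2 \<noteq> 0" using False r2 by (metis power_not_zero)
    ultimately have cs: "c^2 + s^2 = 1" using r2 by simp
    have Q': "(\<lambda>x. giv i j c s (Q x)) \<in> rots (insert i (insert j D))"
      by (rule rots.rots_step[OF rots_mono[OF Q sub]]) (use ij cs in auto)
    have "s * Q v i + c * Q v j = 0" by (simp add: c_def s_def field_simps)
    then have "\<forall>k\<in>insert j D. giv i j c s (Q v) k = 0"
      using z insert.hyps insert.prems ij by (auto simp: giv_def)
    then show ?thesis using Q' by (intro bexI[of _ "\<lambda>x. giv i j c s (Q x)"]) auto
  qed
qed

lemma lemA: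
  fixes v :: "'i \<Rightarrow> real"
  assumes "finite J" "i \<in> J"
  shows "\<exists>Q\<in>rots J. \<forall>k\<in>J - {i}. Q v k = 0"
  using lemA_aux[of "J - {i}" i v] assms by (simp add: insert_absorb)

lemma lemB:
  fixes K :: "'i set" and T :: "'t set"
  assumes "finite T" "finite K"
  shows "\<And>J w. J \<subseteq> K \<Longrightarrow> (\<And>a k. a \<in> T \<Longrightarrow> k \<in> K - J \<Longrightarrow> w a k = 0) \<Longrightarrow>
     (\<And>a b. a \<in> T \<Longrightarrow> b \<in> T \<Longrightarrow> ipK K (w a) (w b) = (if a = b then 1 else 0)) \<Longrightarrow>
     \<exists>Q\<in>rots J. \<exists>\<iota>. inj_on \<iota> T \<and> \<iota> ` T \<subseteq> J \<and> (\<forall>a\<in>T. \<forall>k\<in>K. k \<noteq> \<iota> a \<longrightarrow> Q (w a) k = 0)"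
  using assms(1)
proof (induction T rule: finite_induct)
  case empty
  show ?case by (intro bexI[of _ "\<lambda>x. x"]) (auto intro: rots.intros)
next
  case (insert a T J w)
  have fJ: "finite J" using insert.prems(1) assms(2) finite_subset by blast
  have wa1: "ipK K (w a) (w a) = 1" using insert.prems(3)[of a a] by simp
  have "J \<noteq> {}"
  proof
    assume "J = {}"
    then have "ipK K (w a) (w a) = 0" using insert.prems(2)[of a] by (simp add: ipK_def)
    then show False using wa1 by simp
  qed
  then obtain i where i: "i \<in> J" by auto
  have iK: "i \<in> K" using i insert.prems(1) by auto
  obtain Q1 where Q1: "Q1 \<in> rots J" and z1: "\<forall>k\<in>J - {i}. Q1 (w a) k = 0"
    using lemA[OF fJ i] by blast
  have z1': "Q1 (w a) k = 0" if "k \<in> K" "k \<noteq> i" for k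
  proof (cases "k \<in> J")
    case True then show ?thesis using z1 that by auto
  next
    case False then show ?thesis using rots_outside[OF Q1 False] insert.prems(2)[of a k] that by auto
  qed
  have ipQ: "ipK K (Q1 x) (Q1 y) = ipK K x y" for x y
    by (rule rots_ip[OF Q1 assms(2) insert.prems(1)])
  have ipsingle: "ipK K y (Q1 (w a)) = y i * Q1 (w a) i" for y
  proof -
    have "ipK K y (Q1 (w a)) = (\<Sum>k\<in>K. if k = i then y i * Q1 (w a) i else 0)"
      unfolding ipK_def by (rule sum.cong) (auto simp: z1')
    also have "\<dots> = y i * Q1 (w a) i" using iK assms(2) by simp
    finally show ?thesis .
  qed
  have sq: "Q1 (w a) i * Q1 (w a) i = 1" using ipsingle[of "Q1 (w a)"] ipQ[of "w a" "w a"] wa1 by simp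
  then have nz: "Q1 (w a) i \<noteq> 0" by auto
  define w' where "w' = (\<lambda>b. Q1 (w b))"
  define J' where "J' = J - {i}"
  have wbi: "Q1 (w b) i = 0" if b: "b \<in> T" for b
  proof -
    have "b \<noteq> a" using b insert.hyps by auto
    then have "ipK K (w b) (w a) = 0" using insert.prems(3)[of b a] b by simp
    then have "Q1 (w b) i * Q1 (w a) i = 0" using ipsingle[of "Q1 (w b)"] ipQ[of "w b" "w a"] by simp
    then show ?thesis using nz by simp
  qed
  have IHa: "J' \<subseteq> K" using insert.prems(1) by (auto simp: J'_def)
  have IHb: "w' b k = 0" if "b \<in> T" "k \<in> K - J'" for b k
  proof (cases "k = i")
    case True then show ?thesis using wbi that by (simp add: w'_def)
  next
    case False
    then have "k \<notin> J" using that by (auto simp: J'_def)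
    then show ?thesis using rots_outside[OF Q1, of k] insert.prems(2)[of b k] that by (auto simp: w'_def)
  qed
  have IHc: "ipK K (w' b) (w' b') = (if b = b' then 1 else 0)" if "b \<in> T" "b' \<in> T" for b b'
    using ipQ[of "w b" "w b'"] insert.prems(3)[of b b'] that by (simp add: w'_def)
  obtain Q2 \<iota> where Q2: "Q2 \<in> rots J'" and inj: "inj_on \<iota> T" and img: "\<iota> ` T \<subseteq> J'"
    and z2: "\<forall>b\<in>T. \<forall>k\<in>K. k \<noteq> \<iota> b \<longrightarrow> Q2 (w' b) k = 0"
    using insert.IH[OF IHa IHb IHc] by blast
  have Q2J: "Q2 \<in> rots J" by (rule rots_mono[OF Q2]) (auto simp: J'_def)
  define Q where "Q = (\<lambda>x. Q2 (Q1 x))"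
  have Q: "Q \<in> rots J" unfolding Q_def by (rule rots_comp[OF Q2J Q1])
  define \<iota>' where "\<iota>' = \<iota>(a := i)"
  have inj': "inj_on \<iota>' (insert a T)"
  proof -
    have "i \<notin> \<iota> ` T" using img by (auto simp: J'_def)
    then show ?thesis using inj insert.hyps by (auto simp: \<iota>'_def inj_on_def)
  qed
  have img': "\<iota>' ` insert a T \<subseteq> J" using img i insert.hyps by (auto simp: \<iota>'_def J'_def)
  have z: "\<forall>b\<in>insert a T. \<forall>k\<in>K. k \<noteq> \<iota>' b \<longrightarrow> Q (w b) k = 0"
  proof (intro ballI impI)
    fix b k assume b: "b \<in> insert a T" and k: "k \<in> K" and kb: "k \<noteq> \<iota>' b"
    show "Q (w b) k = 0"
    proof (cases "b = a")
      case True
      then have ki: "k \<noteq> i" using kb by (simp add: \<iota>'_def)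
      show ?thesis
      proof (cases "k \<in> J'")
        case True
        have "\<And>m. m \<in> J' \<Longrightarrow> Q1 (w a) m = 0" using z1' IHa by (auto simp: J'_def)
        then show ?thesis using rots_zero[OF Q2 _ True, of "Q1 (w a)"] \<open>b = a\<close> by (simp add: Q_def)
      next
        case False
        then show ?thesis using rots_outside[OF Q2 False] z1'[OF k ki] \<open>b = a\<close> by (simp add: Q_def)
      qed
    next
      case False
      then have bT: "b \<in> T" using b by auto
      have "\<iota>' b = \<iota> b" using False by (simp add: \<iota>'_def)
      then show ?thesis using z2 bT k kb by (simp add: Q_def w'_def)
    qed
  qed
  show ?case using Q inj' img' z by blast
qed




lemma sum_sq_ipK: "(\<Sum>k\<in>A. (x k)^2) = ipK A x x"
  by (simp add: ipK_def power2_eq_square)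

lemma chi2_lemma:
  fixes A :: "'i set" and m :: "'i \<Rightarrow> real"
  assumes fA: "finite A" and cA: "card A \<ge> 2"
  shows "distr (GM A) borel (\<lambda>y. \<Sum>k\<in>A. (y k + m k)^2) = nc_chi2 (card A) (\<Sum>k\<in>A. (m k)^2)"
proof -
  define n where "n = card A"
  obtain f where f: "bij_betw f {..<n} A"
    using ex_bij_betw_nat_finite[OF fA] by (auto simp: n_def atLeast0LessThan)
  have n2: "n \<ge> 2" using cA by (simp add: n_def)
  define i0 where "i0 = f 0"
  define j0 where "j0 = f 1"
  have i0A: "i0 \<in> A" and j0A: "j0 \<in> A" and ij0: "i0 \<noteq> j0"
  proof -
    have inj: "inj_on f {..<n}" and im: "f ` {..<n} = A" using f by (auto simp: bij_betw_def)
    have l: "0 \<in> {..<n}" "1 \<in> {..<n}" using n2 by auto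
    show "i0 \<in> A" "j0 \<in> A" using l im unfolding i0_def j0_def by auto
    show "i0 \<noteq> j0" unfolding i0_def j0_def using inj_onD[OF inj _ l] by auto
  qed
  obtain Q1 where Q1: "Q1 \<in> rots A" and z1: "\<forall>k\<in>A - {i0}. Q1 m k = 0"
    using lemA[OF fA i0A] by blast
  obtain Q where Q: "Q \<in> rots A" and z: "\<forall>k\<in>A - {i0}. Q m k = 0" and pos: "Q m i0 \<ge> 0"
  proof (cases "Q1 m i0 \<ge> 0")
    case True then show ?thesis using that Q1 z1 by blast
  next
    case False
    have Q': "(\<lambda>x. giv i0 j0 (-1) 0 (Q1 x)) \<in> rots A"
      by (rule rots.rots_step[OF Q1 i0A j0A ij0]) simp
    show ?thesis
      by (rule that[OF Q']) (use False z1 ij0 j0A in \<open>auto simp: giv_def\<close>)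
  qed
  define lam where "lam = (\<Sum>k\<in>A. (m k)^2)"
  define r where "r = sqrt lam"
  have Qm: "Q m k = (if k = i0 then r else 0)" if k: "k \<in> A" for k
  proof -
    have "(\<Sum>k\<in>A. (Q m k)^2) = lam" unfolding sum_sq_ipK lam_def
      by (rule rots_ip[OF Q fA order_refl])
    moreover have "(\<Sum>k\<in>A. (Q m k)^2) = (\<Sum>k\<in>A. if k = i0 then (Q m i0)^2 else 0)"
      by (rule sum.cong) (use z in auto)
    ultimately have "(Q m i0)^2 = lam" using i0A fA by simp
    then have "Q m i0 = r" using pos by (simp add: r_def real_sqrt_unique)
    then show ?thesis using z k by auto
  qed
  define F where "F = (\<lambda>y::'i \<Rightarrow> real. \<Sum>k\<in>A. (y k + (if k = i0 then r else 0))^2)"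
  have Fy: "(\<Sum>k\<in>A. (y k + m k)^2) = F (Q y)" for y
  proof -
    have "(\<Sum>k\<in>A. (y k + m k)^2) = ipK A (\<lambda>k. y k + m k) (\<lambda>k. y k + m k)" by (rule sum_sq_ipK)
    also have "\<dots> = ipK A (Q (\<lambda>k. y k + m k)) (Q (\<lambda>k. y k + m k))"
      by (rule rots_ip[OF Q fA order_refl, symmetric])
    also have "\<dots> = (\<Sum>k\<in>A. (Q y k + Q m k)^2)" by (simp add: rots_add[OF Q] ipK_def power2_eq_square)
    also have "\<dots> = F (Q y)" unfolding F_def by (rule sum.cong) (auto simp: Qm)
    finally show ?thesis .
  qed
  have Fm[measurable]: "F \<in> borel_measurable (GM A)"
    unfolding F_def by measurable
  have "distr (GM A) borel (\<lambda>y. \<Sum>k\<in>A. (y k + m k)^2) = distr (GM A) borel (\<lambda>y. F (Q y))"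
    by (simp add: Fy)
  also have "\<dots> = distr (distr (GM A) (GM A) Q) borel F"
    using distr_distr[OF Fm rots_measurable[OF Q]] by (simp add: comp_def)
  also have "\<dots> = distr (GM A) borel F" by (simp add: rots_distr[OF Q fA])
  finally have E1: "distr (GM A) borel (\<lambda>y. \<Sum>k\<in>A. (y k + m k)^2) = distr (GM A) borel F" .
  define H where "H = (\<lambda>x::nat \<Rightarrow> real. \<Sum>i<n. (x i + (if i = 0 then sqrt lam else 0))^2)"
  define R where "R = (\<lambda>\<omega>::'i \<Rightarrow> real. \<lambda>i\<in>{..<n}. \<omega> (f i))"
  have Rd: "distr (GM A) (PiM {..<n} (\<lambda>_. stdN)) R = PiM {..<n} (\<lambda>_. stdN)"
    unfolding R_def
    using distr_PiM_reindex[of A "\<lambda>_. stdN" f "{..<n}"] f prob_space_stdN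
    by (auto simp: bij_betw_def)
  have Rm: "R \<in> measurable (GM A) (PiM {..<n} (\<lambda>_. stdN))"
    unfolding R_def using f by (intro measurable_restrict measurable_component_singleton) (auto simp: bij_betw_def)
  have Hm: "H \<in> borel_measurable (PiM {..<n} (\<lambda>_. stdN))"
    unfolding H_def by measurable
  have FH: "F \<omega> = H (R \<omega>)" for \<omega>
  proof -
    have "F \<omega> = (\<Sum>i<n. (\<omega> (f i) + (if f i = i0 then r else 0))^2)"
      unfolding F_def using sum.reindex_bij_betw[OF f, of "\<lambda>k. (\<omega> k + (if k = i0 then r else 0))^2"] by simp
    also have "\<dots> = H (R \<omega>)" unfolding H_def R_def r_def
    proof (rule sum.cong)
      fix i assume i: "i \<in> {..<n}"
      have "f i = i0 \<longleftrightarrow> i = 0" using f i n2 unfolding i0_def bij_betw_def inj_on_def by auto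
      then show "(\<omega> (f i) + (if f i = i0 then sqrt lam else 0))^2 = ((\<lambda>i\<in>{..<n}. \<omega> (f i)) i + (if i = 0 then sqrt lam else 0))^2"
        using i by simp
    qed simp
    finally show ?thesis .
  qed
  have FH': "F = (\<lambda>\<omega>. H (R \<omega>))" using FH by (simp add: fun_eq_iff)
  have "distr (GM A) borel F = distr (GM A) borel (\<lambda>\<omega>. H (R \<omega>))" by (simp only: FH')
  also have "\<dots> = distr (distr (GM A) (PiM {..<n} (\<lambda>_. stdN)) R) borel H"
    using distr_distr[OF Hm Rm] by (simp add: comp_def)
  also have "\<dots> = nc_chi2 n lam" unfolding Rd nc_chi2_def H_def
    by (rule distr_cong) auto
  finally show ?thesis using E1 by (simp add: n_def lam_def)
qed

lemma F_lemma:
  fixes A B :: "'i set" and m :: "'i \<Rightarrow> real"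
  assumes fA: "finite A" and fB: "finite B" and AB: "A \<inter> B = {}"
    and cA: "card A \<ge> 2" and cB: "card B \<ge> 2"
  shows "distr (GM (A \<union> B)) borel
           (\<lambda>y. ((\<Sum>k\<in>A. (y k + m k)^2) / real (card A)) / ((\<Sum>k\<in>B. (y k)^2) / real (card B)))
       = nc_F (card A) (card B) (\<Sum>k\<in>A. (m k)^2)"
proof -
  let ?P = "GM A \<Otimes>\<^sub>M GM B"
  define SA where "SA = (\<lambda>y::'i \<Rightarrow> real. \<Sum>k\<in>A. (y k + m k)^2)"
  define SB where "SB = (\<lambda>y::'i \<Rightarrow> real. \<Sum>k\<in>B. (y k)^2)"
  define \<phi> where "\<phi> = (\<lambda>(a::real, b::real). (a / real (card A)) / (b / real (card B)))"
  have SAm[measurable]: "SA \<in> borel_measurable (GM A)" unfolding SA_def by measurable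
  have SBm[measurable]: "SB \<in> borel_measurable (GM B)" unfolding SB_def by measurable
  have \<phi>m: "\<phi> \<in> borel_measurable (borel \<Otimes>\<^sub>M borel)" unfolding \<phi>_def by measurable
  have M: "distr ?P (GM (A \<union> B)) (merge A B) = GM (A \<union> B)"
    by (rule stdN_prod.distr_merge[OF AB fA fB])
  have mm: "merge A B \<in> measurable ?P (GM (A \<union> B))" by (rule measurable_merge)
  define H where "H = (\<lambda>y::'i \<Rightarrow> real. ((\<Sum>k\<in>A. (y k + m k)^2) / real (card A)) / ((\<Sum>k\<in>B. (y k)^2) / real (card B)))"
  have Hm: "H \<in> borel_measurable (GM (A \<union> B))" unfolding H_def by measurable
  have Pm: "(\<lambda>(u,v). (SA u, SB v)) \<in> measurable ?P (borel \<Otimes>\<^sub>M borel)"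
  proof -
    have "(\<lambda>p. (SA (fst p), SB (snd p))) \<in> measurable ?P (borel \<Otimes>\<^sub>M borel)"
      by (intro measurable_Pair measurable_compose[OF measurable_fst SAm] measurable_compose[OF measurable_snd SBm])
    then show ?thesis by (simp add: split_beta')
  qed
  have HM: "H (merge A B p) = \<phi> ((\<lambda>(u,v). (SA u, SB v)) p)" for p
  proof -
    obtain u v where p: "p = (u,v)" by (cases p)
    have 1: "(\<Sum>k\<in>A. (merge A B (u,v) k + m k)^2) = SA u"
      unfolding SA_def by (rule sum.cong) (auto simp: merge_def)
    have 2: "(\<Sum>k\<in>B. (merge A B (u,v) k)^2) = SB v"
      unfolding SB_def by (rule sum.cong) (use AB in \<open>auto simp: merge_def\<close>)
    show ?thesis unfolding p H_def \<phi>_def using 1 2 by simp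
  qed
  have sfB: "sigma_finite_measure (distr (GM B) borel SB)"
    using prob_space_GM[OF fB] by (simp add: prob_space_imp_sigma_finite prob_space.prob_space_distr)
  have DA: "distr (GM A) borel SA = nc_chi2 (card A) (\<Sum>k\<in>A. (m k)^2)"
    unfolding SA_def by (rule chi2_lemma[OF fA cA])
  have DB: "distr (GM B) borel SB = nc_chi2 (card B) 0"
    using chi2_lemma[OF fB cB, of "\<lambda>_. 0"] unfolding SB_def by simp
  have "distr (GM (A \<union> B)) borel H = distr (distr ?P (GM (A \<union> B)) (merge A B)) borel H"
    by (simp only: M)
  also have "\<dots> = distr ?P borel (\<lambda>p. H (merge A B p))"
    using distr_distr[OF Hm mm] by (simp add: comp_def)
  also have "\<dots> = distr ?P borel (\<lambda>p. \<phi> ((\<lambda>(u,v). (SA u, SB v)) p))"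
    by (simp only: HM)
  also have "\<dots> = distr (distr ?P (borel \<Otimes>\<^sub>M borel) (\<lambda>(u,v). (SA u, SB v))) borel \<phi>"
    using distr_distr[OF \<phi>m Pm] by (simp add: comp_def)
  also have "distr ?P (borel \<Otimes>\<^sub>M borel) (\<lambda>(u,v). (SA u, SB v)) = distr (GM A) borel SA \<Otimes>\<^sub>M distr (GM B) borel SB"
    by (rule pair_measure_distr[OF SAm SBm sfB, symmetric])
  also have "distr (distr (GM A) borel SA \<Otimes>\<^sub>M distr (GM B) borel SB) borel \<phi> = nc_F (card A) (card B) (\<Sum>k\<in>A. (m k)^2)"
    unfolding DA DB nc_F_def \<phi>_def ..
  finally show ?thesis unfolding H_def .
qed




lemma sum_delta2:
  fixes G :: "nat \<Rightarrow> nat \<Rightarrow> real"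
  assumes "l < L" "r < NR"
  shows "(\<Sum>l'<L. \<Sum>r'<NR. if l' = l \<and> r' = r then G l' r' else 0) = G l r"
proof -
  have "(\<Sum>l'<L. \<Sum>r'<NR. if l' = l \<and> r' = r then G l' r' else 0) = (\<Sum>l'<L. if l' = l then G l' r else 0)"
  proof (rule sum.cong)
    fix l' show "(\<Sum>r'<NR. if l' = l \<and> r' = r then G l' r' else 0) = (if l' = l then G l' r else 0)"
      using assms by (cases "l' = l") (simp_all add: sum.delta')
  qed simp
  also have "\<dots> = G l r" using assms by (simp add: sum.delta')
  finally show ?thesis .
qed

locale LGsetup =
  fixes NR L Ns :: nat and s :: "nat \<Rightarrow> complex" and c0 :: real
  assumes c0: "c0 > 0" and sne: "\<exists>t<Ns. s t \<noteq> 0"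
begin

definition "K = {..<L} \<times> {..<NR} \<times> {..<Ns} \<times> (UNIV::bool set)"
definition "T = {..<L} \<times> {..<NR} \<times> (UNIV::bool set)"
definition "ns2 = (\<Sum>t<Ns. (cmod (s t))\<^sup>2)"
definition "ns = sqrt ns2"
definition "base = (\<lambda>b t b'. if b then (if b' then Re (s t) else - Im (s t)) else (if b' then Im (s t) else Re (s t)))"
definition "w = (\<lambda>(l::nat, r::nat, b::bool) (l'::nat, r'::nat, t::nat, b'::bool). if l' = l \<and> r' = r then base b t b' / ns else 0)"
definition "emb Yc = (\<lambda>(l, r, t, b). (if b then Im (Yc l r t) else Re (Yc l r t)) / c0)"
definition "NUM y = (\<Sum>a\<in>T. (ipK K y (w a))\<^sup>2)"
definition "TOT y = (\<Sum>k\<in>K. (y k)\<^sup>2)"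

lemma finK: "finite K" and finT: "finite T"
  by (auto simp: K_def T_def)

lemma ns2_pos: "ns2 > 0"
proof -
  obtain t where t: "t < Ns" "s t \<noteq> 0" using sne by auto
  have "0 < (cmod (s t))\<^sup>2" using t by simp
  also have "\<dots> \<le> ns2" unfolding ns2_def
    by (rule member_le_sum) (use t in auto)
  finally show ?thesis .
qed

lemma ns_pos: "ns > 0" and ns_sq: "ns * ns = ns2"
  using ns2_pos by (auto simp: ns_def)

lemma sumK: "(\<Sum>k\<in>K. q k) = (\<Sum>l<L. \<Sum>r<NR. \<Sum>t<Ns. q (l,r,t,False) + q (l,r,t,True))"
  by (simp add: K_def sum.cartesian_product' UNIV_bool add.commute)

lemma sumT: "(\<Sum>a\<in>T. p a) = (\<Sum>l<L. \<Sum>r<NR. p (l,r,False) + p (l,r,True))"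
  by (simp add: T_def sum.cartesian_product' UNIV_bool add.commute)

lemma ipw:
  assumes "l < L" "r < NR"
  shows "ipK K y (w (l,r,b)) = (\<Sum>t<Ns. y (l,r,t,False) * base b t False + y (l,r,t,True) * base b t True) / ns"
proof -
  have "ipK K y (w (l,r,b)) = (\<Sum>l'<L. \<Sum>r'<NR. \<Sum>t<Ns. y (l',r',t,False) * w (l,r,b) (l',r',t,False) + y (l',r',t,True) * w (l,r,b) (l',r',t,True))"
    unfolding ipK_def by (rule sumK)
  also have "\<dots> = (\<Sum>l'<L. \<Sum>r'<NR. if l' = l \<and> r' = r then (\<Sum>t<Ns. y (l',r',t,False) * base b t False + y (l',r',t,True) * base b t True) / ns else 0)"
  proof (intro sum.cong refl)
    fix l' r'
    show "(\<Sum>t<Ns. y (l',r',t,False) * w (l,r,b) (l',r',t,False) + y (l',r',t,True) * w (l,r,b) (l',r',t,True))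
       = (if l' = l \<and> r' = r then (\<Sum>t<Ns. y (l',r',t,False) * base b t False + y (l',r',t,True) * base b t True) / ns else 0)"
      by (cases "l' = l \<and> r' = r") (auto simp: w_def sum_divide_distrib add_divide_distrib)
  qed
  also have "\<dots> = (\<Sum>t<Ns. y (l,r,t,False) * base b t False + y (l,r,t,True) * base b t True) / ns"
    by (rule sum_delta2[OF assms, of "\<lambda>l' r'. (\<Sum>t<Ns. y (l',r',t,False) * base b t False + y (l',r',t,True) * base b t True) / ns"])
  finally show ?thesis .
qed

lemma proj_identity:
  assumes "l < L" "r < NR"
  shows "(cmod (\<Sum>t<Ns. Yc l r t * cnj (s t)))\<^sup>2 = c0\<^sup>2 * ns2 * ((ipK K (emb Yc) (w (l,r,False)))\<^sup>2 + (ipK K (emb Yc) (w (l,r,True)))\<^sup>2)"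
proof -
  define S where "S = (\<Sum>t<Ns. Yc l r t * cnj (s t))"
  have ReS: "Re S = (\<Sum>t<Ns. Re (Yc l r t) * Re (s t) + Im (Yc l r t) * Im (s t))"
    unfolding S_def by (simp add: Re_sum)
  have ImS: "Im S = (\<Sum>t<Ns. Im (Yc l r t) * Re (s t) - Re (Yc l r t) * Im (s t))"
    unfolding S_def by (simp add: Im_sum algebra_simps)
  have i1: "ipK K (emb Yc) (w (l,r,False)) = Re S / (c0 * ns)"
    unfolding ipw[OF assms] ReS using c0
    by (simp add: emb_def base_def sum_divide_distrib add_divide_distrib)
  have i2: "ipK K (emb Yc) (w (l,r,True)) = Im S / (c0 * ns)"
    unfolding ipw[OF assms] ImS using c0
    by (simp add: emb_def base_def sum_divide_distrib diff_divide_distrib algebra_simps)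
  have "(cmod S)\<^sup>2 = (Re S)\<^sup>2 + (Im S)\<^sup>2" by (simp add: cmod_power2)
  also have "\<dots> = c0\<^sup>2 * ns2 * ((Re S / (c0 * ns))\<^sup>2 + (Im S / (c0 * ns))\<^sup>2)"
    using c0 ns_pos ns_sq[symmetric] by (simp add: field_simps power2_eq_square)
  finally show ?thesis unfolding i1 i2 S_def .
qed

lemma frob_identity:
  "(\<Sum>t<Ns. (cmod (Yc l r t))\<^sup>2) = c0\<^sup>2 * (\<Sum>t<Ns. (emb Yc (l,r,t,False))\<^sup>2 + (emb Yc (l,r,t,True))\<^sup>2)"
proof -
  have "(cmod (Yc l r t))\<^sup>2 = c0\<^sup>2 * ((emb Yc (l,r,t,False))\<^sup>2 + (emb Yc (l,r,t,True))\<^sup>2)" for t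
    using c0 by (simp add: emb_def cmod_power2 power_divide field_simps)
  then show ?thesis by (simp add: sum_distrib_left)
qed

lemma LG_identity: "LG_stat NR L Ns s Yc = NUM (emb Yc) / (TOT (emb Yc) - NUM (emb Yc))"
proof -
  define P where "P = (\<lambda>l r. (ipK K (emb Yc) (w (l,r,False)))\<^sup>2 + (ipK K (emb Yc) (w (l,r,True)))\<^sup>2)"
  define F where "F = (\<lambda>l r. \<Sum>t<Ns. (emb Yc (l,r,t,False))\<^sup>2 + (emb Yc (l,r,t,True))\<^sup>2)"
  have proj: "(\<Sum>r<NR. (cmod (\<Sum>t<Ns. Yc l r t * cnj (s t)))\<^sup>2) / ns2 = c0\<^sup>2 * (\<Sum>r<NR. P l r)" if l: "l < L" for l
  proof -
    have "(\<Sum>r<NR. (cmod (\<Sum>t<Ns. Yc l r t * cnj (s t)))\<^sup>2) = (\<Sum>r<NR. c0\<^sup>2 * ns2 * P l r)"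
      by (rule sum.cong) (auto simp: P_def proj_identity[OF l])
    then show ?thesis using ns2_pos by (simp add: sum_distrib_left[symmetric])
  qed
  have frob: "(\<Sum>r<NR. \<Sum>t<Ns. (cmod (Yc l r t))\<^sup>2) = c0\<^sup>2 * (\<Sum>r<NR. F l r)" for l
    by (simp add: frob_identity F_def sum_distrib_left)
  have NUMe: "NUM (emb Yc) = (\<Sum>l<L. \<Sum>r<NR. P l r)" unfolding NUM_def P_def by (rule sumT)
  have TOTe: "TOT (emb Yc) = (\<Sum>l<L. \<Sum>r<NR. F l r)" unfolding TOT_def F_def by (rule sumK)
  have A: "(\<Sum>l<L. (\<Sum>r<NR. (cmod (\<Sum>t<Ns. Yc l r t * cnj (s t)))\<^sup>2) / ns2) = c0\<^sup>2 * NUM (emb Yc)"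
    unfolding NUMe sum_distrib_left by (rule sum.cong) (auto simp: proj sum_distrib_left)
  have B: "(\<Sum>l<L. (\<Sum>r<NR. \<Sum>t<Ns. (cmod (Yc l r t))\<^sup>2) - (\<Sum>r<NR. (cmod (\<Sum>t<Ns. Yc l r t * cnj (s t)))\<^sup>2) / ns2)
       = c0\<^sup>2 * (TOT (emb Yc) - NUM (emb Yc))"
    unfolding NUMe TOTe right_diff_distrib sum_distrib_left sum_subtractf[symmetric]
    by (rule sum.cong) (auto simp: proj frob sum_distrib_left sum_subtractf)
  have "LG_stat NR L Ns s Yc = (c0\<^sup>2 * NUM (emb Yc)) / (c0\<^sup>2 * (TOT (emb Yc) - NUM (emb Yc)))"
    unfolding LG_stat_def Let_def ns2_def[symmetric] A B ..
  also have "\<dots> = NUM (emb Yc) / (TOT (emb Yc) - NUM (emb Yc))"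
    using c0 by simp
  finally show ?thesis .
qed

lemma w_orthonormal:
  assumes a: "a \<in> T" and b: "b \<in> T"
  shows "ipK K (w a) (w b) = (if a = b then 1 else 0)"
proof -
  obtain l r \<beta> where bb: "b = (l,r,\<beta>)" and l: "l < L" and r: "r < NR" using b by (auto simp: T_def)
  obtain l' r' \<alpha> where aa: "a = (l',r',\<alpha>)" using a by (cases a) auto
  have "ipK K (w a) (w b) = (\<Sum>t<Ns. w a (l,r,t,False) * base \<beta> t False + w a (l,r,t,True) * base \<beta> t True) / ns"
    unfolding bb by (rule ipw[OF l r])
  also have "\<dots> = (if a = b then 1 else 0)"
  proof (cases "l' = l \<and> r' = r")
    case False
    then show ?thesis by (auto simp: aa bb w_def)
  next
    case True
    have sq: "(\<Sum>t<Ns. (Re (s t))\<^sup>2 + (Im (s t))\<^sup>2) = ns2"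
      unfolding ns2_def by (simp add: cmod_power2)
    have "(\<Sum>t<Ns. w a (l,r,t,False) * base \<beta> t False + w a (l,r,t,True) * base \<beta> t True) / ns
       = (\<Sum>t<Ns. base \<alpha> t False * base \<beta> t False + base \<alpha> t True * base \<beta> t True) / ns2"
      using True ns_pos ns_sq[symmetric] by (simp add: aa w_def sum_divide_distrib[symmetric] field_simps)
    also have "\<dots> = (if a = b then 1 else 0)"
    proof (cases "\<alpha> = \<beta>")
      case True
      then have "(\<Sum>t<Ns. base \<alpha> t False * base \<beta> t False + base \<alpha> t True * base \<beta> t True) = ns2"
        using sq by (cases \<alpha>) (auto simp: base_def power2_eq_square add.commute)
      then show ?thesis using True \<open>l' = l \<and> r' = r\<close> ns2_pos by (simp add: aa bb)
    next
      case False
      then have "(\<Sum>t<Ns. base \<alpha> t False * base \<beta> t False + base \<alpha> t True * base \<beta> t True) = 0"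
        by (cases \<alpha>; cases \<beta>) (auto simp: base_def algebra_simps)
      then show ?thesis using False by (simp add: aa bb)
    qed
    finally show ?thesis .
  qed
  finally show ?thesis .
qed

lemma NUM_TOT_mean: "NUM (emb (\<lambda>l r t. h l r * s t)) = TOT (emb (\<lambda>l r t. h l r * s t))"
  and TOT_mean: "TOT (emb (\<lambda>l r t. h l r * s t)) = ns2 * (\<Sum>l<L. \<Sum>r<NR. (cmod (h l r))\<^sup>2) / c0\<^sup>2"
proof -
  let ?Y = "\<lambda>l r t. h l r * s t"
  define P where "P = (\<lambda>l r. (ipK K (emb ?Y) (w (l,r,False)))\<^sup>2 + (ipK K (emb ?Y) (w (l,r,True)))\<^sup>2)"
  define F where "F = (\<lambda>l r. \<Sum>t<Ns. (emb ?Y (l,r,t,False))\<^sup>2 + (emb ?Y (l,r,t,True))\<^sup>2)"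
  have ss: "(\<Sum>t<Ns. s t * cnj (s t)) = complex_of_real ns2"
    unfolding ns2_def by (simp add: complex_mult_cnj cmod_power2)
  have Fv: "F l r = (cmod (h l r))\<^sup>2 * ns2 / c0\<^sup>2" for l r
  proof -
    have "c0\<^sup>2 * F l r = (\<Sum>t<Ns. (cmod (h l r * s t))\<^sup>2)" unfolding F_def by (rule frob_identity[symmetric])
    also have "\<dots> = (cmod (h l r))\<^sup>2 * ns2" by (simp add: ns2_def norm_mult power_mult_distrib sum_distrib_left)
    finally show ?thesis using c0 by (simp add: field_simps)
  qed
  have PF: "P l r = F l r" if "l < L" "r < NR" for l r
  proof -
    have "c0\<^sup>2 * ns2 * P l r = (cmod (\<Sum>t<Ns. h l r * s t * cnj (s t)))\<^sup>2"
      unfolding P_def by (rule proj_identity[symmetric, OF that])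
    also have "(\<Sum>t<Ns. h l r * s t * cnj (s t)) = h l r * complex_of_real ns2"
      by (simp add: ss[symmetric] sum_distrib_left mult.assoc)
    also have "(cmod (h l r * complex_of_real ns2))\<^sup>2 = (cmod (h l r))\<^sup>2 * ns2 * ns2"
      using ns2_pos by (simp add: norm_mult power2_eq_square)
    finally have "c0\<^sup>2 * ns2 * P l r = (cmod (h l r))\<^sup>2 * ns2 * ns2" .
    then have "c0 * (c0 * P l r) = c0 * (c0 * F l r)" using ns2_pos c0 Fv[of l r] by (simp add: field_simps power2_eq_square)
    then show ?thesis using c0 by simp
  qed
  have "NUM (emb ?Y) = (\<Sum>l<L. \<Sum>r<NR. P l r)" unfolding NUM_def P_def by (rule sumT)
  also have "\<dots> = (\<Sum>l<L. \<Sum>r<NR. F l r)" by (intro sum.cong refl) (simp add: PF)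
  also have "\<dots> = TOT (emb ?Y)" unfolding TOT_def F_def by (rule sumK[symmetric])
  finally show "NUM (emb ?Y) = TOT (emb ?Y)" .
  have "TOT (emb ?Y) = (\<Sum>l<L. \<Sum>r<NR. F l r)" unfolding TOT_def F_def by (rule sumK)
  also have "\<dots> = ns2 * (\<Sum>l<L. \<Sum>r<NR. (cmod (h l r))\<^sup>2) / c0\<^sup>2"
    by (simp add: Fv sum_divide_distrib sum_distrib_left mult.commute)
  finally show "TOT (emb ?Y) = ns2 * (\<Sum>l<L. \<Sum>r<NR. (cmod (h l r))\<^sup>2) / c0\<^sup>2" .
qed

lemma NUM_cong: "(\<And>k. k \<in> K \<Longrightarrow> y k = y' k) \<Longrightarrow> NUM y = NUM y'"
  unfolding NUM_def ipK_def by (intro sum.cong refl arg_cong[where f="\<lambda>x. x\<^sup>2"]) auto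

lemma TOT_cong: "(\<And>k. k \<in> K \<Longrightarrow> y k = y' k) \<Longrightarrow> TOT y = TOT y'"
  unfolding TOT_def by (intro sum.cong refl) auto

lemma cardK: "card K = L * (NR * (Ns * 2))" and cardT: "card T = L * (NR * 2)"
  by (simp_all add: K_def T_def card_cartesian_product)

lemma main_distr:
  fixes M :: "'w measure" and g :: "'w \<Rightarrow> (nat \<times> nat \<times> nat \<times> bool) \<Rightarrow> real"
    and Z :: "'w \<Rightarrow> nat \<Rightarrow> nat \<Rightarrow> nat \<Rightarrow> complex" and h :: "nat \<Rightarrow> nat \<Rightarrow> complex"
  assumes NR: "NR > 0" and L: "L > 0" and Ns: "Ns \<ge> 2"
    and gm: "g \<in> measurable M (GM K)" and gd: "distr M (GM K) g = GM K"
    and embg: "\<And>\<omega> k. k \<in> K \<Longrightarrow> emb (\<lambda>l r t. h l r * s t + Z \<omega> l r t) k = g \<omega> k + emb (\<lambda>l r t. h l r * s t) k"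
  shows "distr M borel (\<lambda>\<omega>. (real Ns - 1) * LG_stat NR L Ns s (\<lambda>l r t. h l r * s t + Z \<omega> l r t))
       = nc_F (2 * NR * L) (2 * NR * L * (Ns - 1)) (TOT (emb (\<lambda>l r t. h l r * s t)))"
proof -
  define m where "m = emb (\<lambda>l r t. h l r * s t)"
  obtain Q \<iota> where Q: "Q \<in> rots K" and inj: "inj_on \<iota> T" and img: "\<iota> ` T \<subseteq> K"
    and zq: "\<forall>a\<in>T. \<forall>k\<in>K. k \<noteq> \<iota> a \<longrightarrow> Q (w a) k = 0"
  proof -
    have "\<exists>Q\<in>rots K. \<exists>\<iota>. inj_on \<iota> T \<and> \<iota> ` T \<subseteq> K \<and> (\<forall>a\<in>T. \<forall>k\<in>K. k \<noteq> \<iota> a \<longrightarrow> Q (w a) k = 0)"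
      by (rule lemB[OF finT finK order_refl]) (simp_all add: w_orthonormal)
    then show ?thesis using that by blast
  qed
  define A where "A = \<iota> ` T"
  define B where "B = K - A"
  have KAB: "K = A \<union> B" and AB: "A \<inter> B = {}" and AK: "A \<subseteq> K" using img by (auto simp: A_def B_def)
  have fA: "finite A" and fB: "finite B" using finK AK by (auto simp: B_def intro: finite_subset)
  have ipQ: "ipK K (Q x) (Q y) = ipK K x y" for x y by (rule rots_ip[OF Q finK order_refl])
  have ipsingle: "ipK K x (Q (w a)) = x (\<iota> a) * Q (w a) (\<iota> a)" if a: "a \<in> T" for x a
  proof -
    have ia: "\<iota> a \<in> K" using img a by auto
    have "ipK K x (Q (w a)) = (\<Sum>k\<in>K. if k = \<iota> a then x (\<iota> a) * Q (w a) (\<iota> a) else 0)"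
      unfolding ipK_def by (rule sum.cong) (use zq a in auto)
    also have "\<dots> = x (\<iota> a) * Q (w a) (\<iota> a)" using ia finK by simp
    finally show ?thesis .
  qed
  have unit: "(Q (w a) (\<iota> a))\<^sup>2 = 1" if a: "a \<in> T" for a
    using ipsingle[OF a, of "Q (w a)"] ipQ[of "w a" "w a"] w_orthonormal[OF a a] by (simp add: power2_eq_square)
  have NUMQ: "NUM y = (\<Sum>k\<in>A. (Q y k)\<^sup>2)" for y
  proof -
    have "NUM y = (\<Sum>a\<in>T. (Q y (\<iota> a))\<^sup>2)" unfolding NUM_def
    proof (rule sum.cong)
      fix a assume a: "a \<in> T"
      have "(ipK K y (w a))\<^sup>2 = (Q y (\<iota> a) * Q (w a) (\<iota> a))\<^sup>2" using ipQ[of y "w a"] ipsingle[OF a, of "Q y"] by simp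
      also have "\<dots> = (Q y (\<iota> a))\<^sup>2" using unit[OF a] by (simp add: power_mult_distrib)
      finally show "(ipK K y (w a))\<^sup>2 = (Q y (\<iota> a))\<^sup>2" .
    qed simp
    also have "\<dots> = (\<Sum>k\<in>A. (Q y k)\<^sup>2)" unfolding A_def using sum.reindex[OF inj, of "\<lambda>k. (Q y k)\<^sup>2"] by simp
    finally show ?thesis .
  qed
  have TOTQ: "TOT y = (\<Sum>k\<in>K. (Q y k)\<^sup>2)" for y
    using ipQ[of y y] by (simp add: TOT_def sum_sq_ipK)
  have DIFF: "TOT y - NUM y = (\<Sum>k\<in>B. (Q y k)\<^sup>2)" for y
    unfolding TOTQ NUMQ B_def using sum.subset_diff[OF AK finK, of "\<lambda>k. (Q y k)\<^sup>2"] by simp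
  have mB: "Q m k = 0" if k: "k \<in> B" for k
  proof -
    have "(\<Sum>k\<in>B. (Q m k)\<^sup>2) = 0" using DIFF[of m] NUM_TOT_mean[of h] by (simp add: m_def)
    then show ?thesis using fB k by (simp add: sum_nonneg_eq_0_iff)
  qed
  have lamA: "(\<Sum>k\<in>A. (Q m k)\<^sup>2) = TOT m" using NUMQ[of m] NUM_TOT_mean[of h] by (simp add: m_def)
  have cA: "card A = 2 * NR * L" using card_image[OF inj] cardT by (simp add: A_def)
  have cB: "card B = 2 * NR * L * (Ns - 1)"
  proof -
    have "card B = card K - card A" unfolding B_def by (rule card_Diff_subset[OF fA AK])
    also have "\<dots> = 2 * NR * L * (Ns - 1)" unfolding cardK cA by (simp add: algebra_simps diff_mult_distrib2)
    finally show ?thesis .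
  qed
  have cA2: "card A \<ge> 2" using cA NR L by simp
  have cB2: "card B \<ge> 2" using cB NR L Ns by simp
  define Fn where "Fn = (\<lambda>y::(nat \<times> nat \<times> nat \<times> bool) \<Rightarrow> real. ((\<Sum>k\<in>A. (y k + Q m k)^2) / real (card A)) / ((\<Sum>k\<in>B. (y k)^2) / real (card B)))"
  have stat: "(real Ns - 1) * LG_stat NR L Ns s (\<lambda>l r t. h l r * s t + Z \<omega> l r t) = Fn (Q (g \<omega>))" for \<omega>
  proof -
    define y where "y = (\<lambda>k. g \<omega> k + m k)"
    have "LG_stat NR L Ns s (\<lambda>l r t. h l r * s t + Z \<omega> l r t) = NUM y / (TOT y - NUM y)"
      unfolding LG_identity y_def m_def
      using NUM_cong[OF embg] TOT_cong[OF embg] by simp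
    also have "\<dots> = (\<Sum>k\<in>A. (Q (g \<omega>) k + Q m k)\<^sup>2) / (\<Sum>k\<in>B. (Q (g \<omega>) k)\<^sup>2)"
    proof -
      have "(\<Sum>k\<in>B. (Q y k)\<^sup>2) = (\<Sum>k\<in>B. (Q (g \<omega>) k)\<^sup>2)"
        unfolding y_def rots_add[OF Q] by (rule sum.cong) (simp_all add: mB)
      then show ?thesis unfolding DIFF unfolding NUMQ y_def rots_add[OF Q] by simp
    qed
    finally have e: "LG_stat NR L Ns s (\<lambda>l r t. h l r * s t + Z \<omega> l r t) = (\<Sum>k\<in>A. (Q (g \<omega>) k + Q m k)\<^sup>2) / (\<Sum>k\<in>B. (Q (g \<omega>) k)\<^sup>2)" .
    have rB: "real (card B) = (real Ns - 1) * real (card A)" using cA cB Ns by (simp add: of_nat_diff)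
    have pA: "real (card A) > 0" using cA2 by simp
    have gen: "q * (a / b) = (a / n) / (b / (q * n))" if "n \<noteq> 0" for q a b n :: real
      using that by (cases "b = 0"; cases "q = 0") (simp_all add: field_simps)
    show ?thesis unfolding e Fn_def rB using pA by (intro gen) simp
  qed
  have Fnm: "Fn \<in> borel_measurable (GM (A \<union> B))" unfolding Fn_def by measurable
  have "distr M borel (\<lambda>\<omega>. (real Ns - 1) * LG_stat NR L Ns s (\<lambda>l r t. h l r * s t + Z \<omega> l r t))
      = distr M borel (\<lambda>\<omega>. Fn (Q (g \<omega>)))" by (simp add: stat)
  also have "\<dots> = distr (distr M (GM K) (\<lambda>\<omega>. Q (g \<omega>))) borel Fn"
    using distr_distr[OF Fnm[folded KAB] measurable_comp[OF gm rots_measurable[OF Q]]] by (simp add: comp_def)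
  also have "distr M (GM K) (\<lambda>\<omega>. Q (g \<omega>)) = distr (distr M (GM K) g) (GM K) Q"
    using distr_distr[OF rots_measurable[OF Q] gm] by (simp add: comp_def)
  also have "\<dots> = GM K" by (simp add: gd rots_distr[OF Q finK])
  also have "distr (GM K) borel Fn = nc_F (card A) (card B) (\<Sum>k\<in>A. (Q m k)^2)"
    unfolding KAB Fn_def by (rule F_lemma[OF fA fB AB cA2 cB2])
  finally show ?thesis using lamA unfolding m_def by (simp add: cA cB)
qed

end

theorem proposition2:
  fixes M :: "'w measure"
    and NR L Ns :: nat
    and s :: "nat \<Rightarrow> complex"
    and h :: "nat \<Rightarrow> nat \<Rightarrow> complex"
    and Z :: "'w \<Rightarrow> nat \<Rightarrow> nat \<Rightarrow> nat \<Rightarrow> complex"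
    and sigma2 :: real
  assumes "prob_space M"
    and "NR > 0" and "L > 0" and "Ns \<ge> 2"
    and "\<exists>t<Ns. s t \<noteq> 0"
    and "sigma2 > 0"
    and "prob_space.indep_vars M (\<lambda>_. borel)
           (\<lambda>(l, r, t, b) \<omega>. if b then Im (Z \<omega> l r t) else Re (Z \<omega> l r t))
           ({..<L} \<times> {..<NR} \<times> {..<Ns} \<times> UNIV)"
    and "\<And>l r t. l < L \<Longrightarrow> r < NR \<Longrightarrow> t < Ns \<Longrightarrow>
           distributed M lborel (\<lambda>\<omega>. Re (Z \<omega> l r t)) (normal_density 0 (sqrt (sigma2 / 2)))"
    and "\<And>l r t. l < L \<Longrightarrow> r < NR \<Longrightarrow> t < Ns \<Longrightarrow>
           distributed M lborel (\<lambda>\<omega>. Im (Z \<omega> l r t)) (normal_density 0 (sqrt (sigma2 / 2)))"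
  shows
    "distr M borel (\<lambda>\<omega>. (real Ns - 1) * LG_stat NR L Ns s (Z \<omega>))
       = nc_F (2 * NR * L) (2 * NR * L * (Ns - 1)) 0
     \<and> distr M borel
         (\<lambda>\<omega>. (real Ns - 1) * LG_stat NR L Ns s (\<lambda>l r t. h l r * s t + Z \<omega> l r t))
       = nc_F (2 * NR * L) (2 * NR * L * (Ns - 1))
           (2 * (\<Sum>t<Ns. (cmod (s t))\<^sup>2) * (\<Sum>l<L. \<Sum>r<NR. (cmod (h l r))\<^sup>2) / sigma2)"
proof -
  interpret P: prob_space M by fact
  define c0 where "c0 = sqrt (sigma2 / 2)"
  have c0: "c0 > 0" using assms(6) by (simp add: c0_def)
  have c0sq: "c0\<^sup>2 = sigma2 / 2" using assms(6) by (simp add: c0_def)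
  interpret S: LGsetup NR L Ns s c0
    by unfold_locales (use c0 assms(5) in auto)
  define Xf :: "nat \<times> nat \<times> nat \<times> bool \<Rightarrow> 'w \<Rightarrow> real"
    where "Xf = (\<lambda>(l, r, t, b) \<omega>. if b then Im (Z \<omega> l r t) else Re (Z \<omega> l r t))"
  have KK: "S.K = {..<L} \<times> {..<NR} \<times> {..<Ns} \<times> UNIV" by (simp add: S.K_def)
  have ind: "P.indep_vars (\<lambda>_. borel) Xf S.K" using assms(7) unfolding KK Xf_def .
  have ind2: "P.indep_vars (\<lambda>_. borel) (\<lambda>k \<omega>. Xf k \<omega> / c0) S.K"
    by (rule P.indep_vars_compose2[OF ind]) simp
  have rv: "(\<lambda>\<omega>. Xf k \<omega> / c0) \<in> measurable M borel" if "k \<in> S.K" for k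
    using ind2 that unfolding P.indep_vars_def by auto
  have Kne: "S.K \<noteq> {}"
  proof -
    have "(0, 0, 0, False) \<in> S.K" using assms(2,3,4) by (auto simp: S.K_def)
    then show ?thesis by auto
  qed
  have dk: "distr M borel (\<lambda>\<omega>. Xf k \<omega> / c0) = stdN" if k: "k \<in> S.K" for k
  proof -
    obtain l r t b where kk: "k = (l,r,t,b)" and lrt: "l < L" "r < NR" "t < Ns" using k by (auto simp: S.K_def)
    have "distributed M lborel (Xf k) (normal_density 0 c0)"
      using assms(8)[OF lrt] assms(9)[OF lrt] unfolding kk Xf_def c0_def by (cases b) auto
    then have "distributed M lborel (\<lambda>x. (Xf k x - 0) / c0) std_normal_density"
      using P.normal_standard_normal_convert[OF c0] by simp
    then have "distr M lborel (\<lambda>\<omega>. Xf k \<omega> / c0) = stdN" by (simp add: distributed_def)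
    moreover have "distr M borel (\<lambda>\<omega>. Xf k \<omega> / c0) = distr M lborel (\<lambda>\<omega>. Xf k \<omega> / c0)"
      by (rule distr_cong) auto
    ultimately show ?thesis by simp
  qed
  define g where "g = (\<lambda>\<omega>. \<lambda>k\<in>S.K. Xf k \<omega> / c0)"
  have D0: "distr M (PiM S.K (\<lambda>_. borel)) g = PiM S.K (\<lambda>k. distr M borel (\<lambda>\<omega>. Xf k \<omega> / c0))"
    unfolding g_def using P.indep_vars_iff_distr_eq_PiM'[OF Kne rv] ind2 by simp
  have setsK: "sets (GM S.K) = sets (PiM S.K (\<lambda>_. borel))" by (rule sets_PiM_cong) auto
  have gm0: "g \<in> measurable M (PiM S.K (\<lambda>_. borel))"
    unfolding g_def by (rule measurable_restrict) (use rv in auto)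
  have gm: "g \<in> measurable M (GM S.K)"
    using gm0 unfolding measurable_cong_sets[OF refl setsK] .
  have gd: "distr M (GM S.K) g = GM S.K"
  proof -
    have "distr M (GM S.K) g = distr M (PiM S.K (\<lambda>_. borel)) g"
      by (rule distr_cong[OF refl setsK]) simp
    also have "\<dots> = PiM S.K (\<lambda>k. distr M borel (\<lambda>\<omega>. Xf k \<omega> / c0))" by (rule D0)
    also have "\<dots> = GM S.K" by (rule PiM_cong) (auto simp: dk)
    finally show ?thesis .
  qed
  have embg: "S.emb (\<lambda>l r t. h' l r * s t + Z \<omega> l r t) k = g \<omega> k + S.emb (\<lambda>l r t. h' l r * s t) k"
    if "k \<in> S.K" for k \<omega> and h' :: "nat \<Rightarrow> nat \<Rightarrow> complex"
    using that c0 by (auto simp: S.emb_def g_def Xf_def add_divide_distrib split: prod.splits)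
  have H1: "distr M borel (\<lambda>\<omega>. (real Ns - 1) * LG_stat NR L Ns s (\<lambda>l r t. h' l r * s t + Z \<omega> l r t))
       = nc_F (2 * NR * L) (2 * NR * L * (Ns - 1)) (S.ns2 * (\<Sum>l<L. \<Sum>r<NR. (cmod (h' l r))\<^sup>2) / c0\<^sup>2)"
    for h' :: "nat \<Rightarrow> nat \<Rightarrow> complex"
    using S.main_distr[OF assms(2,3,4) gm gd embg] S.TOT_mean[of h'] by simp
  have Z0: "(\<lambda>l r t. (0::complex) * s t + Z \<omega> l r t) = Z \<omega>" for \<omega> by (simp add: fun_eq_iff)
  have "distr M borel (\<lambda>\<omega>. (real Ns - 1) * LG_stat NR L Ns s (Z \<omega>)) = nc_F (2 * NR * L) (2 * NR * L * (Ns - 1)) 0"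
    using H1[of "\<lambda>_ _. 0"] by (simp add: Z0)
  moreover have "S.ns2 * (\<Sum>l<L. \<Sum>r<NR. (cmod (h l r))\<^sup>2) / c0\<^sup>2
      = 2 * (\<Sum>t<Ns. (cmod (s t))\<^sup>2) * (\<Sum>l<L. \<Sum>r<NR. (cmod (h l r))\<^sup>2) / sigma2"
    unfolding c0sq S.ns2_def using assms(6) by (simp add: field_simps)
  ultimately show ?thesis using H1[of h] by simp
qed


end
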